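(* Let $n\ge2$ and $\mathsf u\in\mathcal S_n$. Then $\mathsf r^{\mathsf u}$ is a cyclic factorization of $\lambda_n$.
   Context: $\widetilde S_n$ is the group, under composition $(vw)(k)=v(w(k))$, of bijections $w:\mathbb Z\to\mathbb Z$ with $w(i+n)=w(i)+n$ and $\sum_{i=1}^n w(i)=\binom{n+1}2$. For $i\not\equiv j\pmod n$, $(\!(i,j)\!)$ swaps $i+kn$ and $j+kn$ for all $k$; $(\!(i,j)\!)=(\!(j,i)\!)=(\!(i+kn,j+kn)\!)$; $s_i=(\!(i,i+1)\!)$, $i\in\{0,\dots,n-1\}$. "$i\bmod n$" is the representative in $\{1,\dots,n\}$. $\lambda_n(k)=k+n$ for $k\not\equiv0\pmod n$, $\lambda_n(k)=k-n(n-1)$ for $k\equiv0\pmod n$; its reflection length is $2n-2$; $\textsc{fact}(\lambda_n)$ is the set of sequences of $2n-2$ reflections with product $\lambda_n$. Such $[r_1,\dots,r_{2n-2}]$ is tree-like if one can write $r_i=(\!(a_{i-1},b_i)\!)$ with integers $a_{i-1}<b_i$ and $a_i\equiv b_i\pmod n$ ($1\le i\le 2n-3$). For $k\in[n]$, $N_{\mathsf r}(k)$ is the list, in increasing order of $i$, of $b_i\bmod n$ over all $i$ with $a_{i-1}\equiv k\pmod n$. A tree-like $\mathsf r$ is cyclic if (i) $N_{\mathsf r}(n)$ is strictly increasing and (ii) for each $1\le k<n$, writing $N_{\mathsf r}(k)=[c_1,\dots,c_\ell]$, there is $1\le j\le \ell$ with $c_j<\dots<c_{\ell-1}<k<c_1<\dots<c_{j-1}$.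 $\bm\lambda_n$ is the word $[s_0,\dots,s_{n-1}]$ repeated $n-1$ times with $j$-th letter $\sigma_j=s_{(j-1)\bmod n}$ (index in $\{0,\dots,n-1\}$). A subword is $\mathsf u=[u_1,\dots,u_{n(n-1)}]$ with $u_j\in\{\sigma_j,e\}$; $j$ is a skip if $u_j=e$. $u_{(j)}=u_1\cdots u_j$, $u_{(0)}=e$. $\mathcal S_n$ is the set of subwords with exactly $2n-2$ skips and product $e$. $\textsc{inv}(\mathsf u)=[t_1,\dots,t_{n(n-1)}]$, $t_j=u_{(j-1)}\sigma_ju_{(j-1)}^{-1}$; $\mathsf r^{\mathsf u}$ is the subsequence of the $t_j$ at skips, in increasing order. *)

theory Defs
  imports Main
begin

text \<open>Affine permutations are represented as functions int => int; composition
  (v w)(k) = v (w k) is function composition.\<close>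

definition modn :: "nat \<Rightarrow> int \<Rightarrow> int" where
  "modn n x = (x - 1) mod int n + 1"

text \<open>The reflection ((i,j)): swaps i+kn and j+kn for all k (meaningful for i, j
  not congruent mod n).\<close>
definition refl_aff :: "nat \<Rightarrow> int \<Rightarrow> int \<Rightarrow> int \<Rightarrow> int" where
  "refl_aff n i j k =
     (if k mod int n = i mod int n then k - i + j
      else if k mod int n = j mod int n then k - j + i
      else k)"

definition is_reflection :: "nat \<Rightarrow> (int \<Rightarrow> int) \<Rightarrow> bool" where
  "is_reflection n r \<longleftrightarrow> (\<exists>i j. i mod int n \<noteq> j mod int n \<and> r = refl_aff n i j)"

definition sgen :: "nat \<Rightarrow> int \<Rightarrow> int \<Rightarrow> int" where
  "sgen n i = refl_aff n i (i + 1)"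

definition prodw :: "(int \<Rightarrow> int) list \<Rightarrow> int \<Rightarrow> int" where
  "prodw ws = foldr (\<circ>) ws id"

definition lambda_aff :: "nat \<Rightarrow> int \<Rightarrow> int" where
  "lambda_aff n k = (if k mod int n \<noteq> 0 then k + int n else k - int n * (int n - 1))"

definition fact_lambda :: "nat \<Rightarrow> (int \<Rightarrow> int) list set" where
  "fact_lambda n = {rs. length rs = 2 * n - 2 \<and> (\<forall>r \<in> set rs. is_reflection n r)
                        \<and> prodw rs = lambda_aff n}"

text \<open>Tree-like witnesses: r_i = ((a_(i-1), b_i)), a_(i-1) < b_i, and
  a_i = b_i mod n for 1 <= i <= 2n-3.  Indices: r_i = rs ! (i-1), i = 1..2n-2;
  a is used at 0..2n-3, b at 1..2n-2.\<close>
definition treelike_wit :: "nat \<Rightarrow> (int \<Rightarrow> int) list \<Rightarrow> (nat \<Rightarrow> int) \<Rightarrow> (nat \<Rightarrow> int) \<Rightarrow> bool" where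
  "treelike_wit n rs a b \<longleftrightarrow>
     (\<forall>i \<in> {1..length rs}.
        a (i - 1) mod int n \<noteq> b i mod int n \<and>
        rs ! (i - 1) = refl_aff n (a (i - 1)) (b i) \<and> a (i - 1) < b i) \<and>
     (\<forall>i \<in> {1..2 * n - 3}. a i mod int n = b i mod int n)"

definition treelike :: "nat \<Rightarrow> (int \<Rightarrow> int) list \<Rightarrow> bool" where
  "treelike n rs \<longleftrightarrow> (\<exists>a b. treelike_wit n rs a b)"

definition Nlist :: "nat \<Rightarrow> nat \<Rightarrow> (nat \<Rightarrow> int) \<Rightarrow> (nat \<Rightarrow> int) \<Rightarrow> int \<Rightarrow> int list" where
  "Nlist n m a b k = map (\<lambda>i. modn n (b i)) (filter (\<lambda>i. modn n (a (i - 1)) = modn n k) [1..<m + 1])"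

text \<open>Condition (ii) for N = [c_1,...,c_l]: there is 1 <= j <= l with
  c_j < ... < c_(l-1) < k < c_1 < ... < c_(j-1); here j' = j - 1.\<close>
definition cyc_cond :: "int \<Rightarrow> int list \<Rightarrow> bool" where
  "cyc_cond k cs \<longleftrightarrow> (\<exists>j' < length cs.
      sorted_wrt (<) (drop j' (butlast cs) @ [k] @ take j' cs))"

definition cyclic_fact :: "nat \<Rightarrow> (int \<Rightarrow> int) list \<Rightarrow> bool" where
  "cyclic_fact n rs \<longleftrightarrow> (\<exists>a b. treelike_wit n rs a b \<and>
      sorted_wrt (<) (Nlist n (length rs) a b (int n)) \<and>
      (\<forall>k \<in> {1..<int n}. cyc_cond k (Nlist n (length rs) a b k)))"

definition cyclic_factorization_of_lambda :: "nat \<Rightarrow> (int \<Rightarrow> int) list \<Rightarrow> bool" where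
  "cyclic_factorization_of_lambda n rs \<longleftrightarrow> rs \<in> fact_lambda n \<and> treelike n rs \<and> cyclic_fact n rs"

text \<open>j-th letter of the word bold-lambda_n, j = 1..n(n-1): sigma_j = s_((j-1) mod n).\<close>
definition sigma :: "nat \<Rightarrow> nat \<Rightarrow> int \<Rightarrow> int" where
  "sigma n j = sgen n (int ((j - 1) mod n))"

definition is_subword :: "nat \<Rightarrow> (int \<Rightarrow> int) list \<Rightarrow> bool" where
  "is_subword n u \<longleftrightarrow> length u = n * (n - 1) \<and>
     (\<forall>j \<in> {1..n * (n - 1)}. u ! (j - 1) = sigma n j \<or> u ! (j - 1) = id)"

definition skips :: "(int \<Rightarrow> int) list \<Rightarrow> nat list" where
  "skips u = filter (\<lambda>j. u ! (j - 1) = id) [1..<length u + 1]"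

definition S_set :: "nat \<Rightarrow> (int \<Rightarrow> int) list set" where
  "S_set n = {u. is_subword n u \<and> length (skips u) = 2 * n - 2 \<and> prodw u = id}"

definition upref :: "(int \<Rightarrow> int) list \<Rightarrow> nat \<Rightarrow> int \<Rightarrow> int" where
  "upref u j = prodw (take j u)"

definition tinv :: "nat \<Rightarrow> (int \<Rightarrow> int) list \<Rightarrow> nat \<Rightarrow> int \<Rightarrow> int" where
  "tinv n u j = upref u (j - 1) \<circ> sigma n j \<circ> inv (upref u (j - 1))"

definition r_of :: "nat \<Rightarrow> (int \<Rightarrow> int) list \<Rightarrow> (int \<Rightarrow> int) list" where
  "r_of n u = map (tinv n u) (skips u)"

end

theory Submission
  imports Defs
begin

definition periodic :: "nat \<Rightarrow> (int \<Rightarrow> int) \<Rightarrow> bool" where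
  "periodic n f \<longleftrightarrow> (\<forall>x. f (x + int n) = f x + int n)"

lemma periodic_shift:
  assumes "periodic n f" shows "f (x + m * int n) = f x + m * int n"
proof -
  have pos: "f (x + int k * int n) = f x + int k * int n" for x k
  proof (induction k arbitrary: x)
    case 0 then show ?case by simp
  next
    case (Suc k)
    have "f (x + int (Suc k) * int n) = f ((x + int k * int n) + int n)" by (simp add: algebra_simps)
    also have "\<dots> = f (x + int k * int n) + int n" using assms periodic_def by blast
    finally show ?case using Suc by (simp add: algebra_simps)
  qed
  show ?thesis
  proof (cases "m \<ge> 0")
    case True then show ?thesis using pos[of x "nat m"] by simp
  next
    case False
    define k where "k = nat (- m)"
    have k: "m = - int k" using False k_def by simp
    have "f ((x + m * int n) + int k * int n) = f (x + m * int n) + int k * int n" by (rule pos)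
    then show ?thesis using k by (simp add: algebra_simps)
  qed
qed

lemma modeq_iff: "(x::int) mod m = y mod m \<longleftrightarrow> m dvd (x - y)"
  by (simp add: mod_eq_dvd_iff)

lemma mod_eq_obtain:
  assumes "(a::int) mod m = b mod m" obtains q where "a = b + q * m"
proof -
  have "m dvd a - b" using assms by (simp add: mod_eq_dvd_iff)
  then obtain q where "a - b = m * q" by (elim dvdE)
  then have "a = b + q * m" by (simp add: algebra_simps)
  then show ?thesis using that by blast
qed

lemma refl_aff_periodic: "periodic n (refl_aff n i j)"
  unfolding periodic_def refl_aff_def by auto

lemma refl_aff_invol:
  assumes "i mod int n \<noteq> j mod int n"
  shows "refl_aff n i j (refl_aff n i j k) = k"
proof -
  consider (a) "k mod int n = i mod int n" | (b) "k mod int n \<noteq> i mod int n" "k mod int n = j mod int n"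
    | (c) "k mod int n \<noteq> i mod int n" "k mod int n \<noteq> j mod int n" by blast
  then show ?thesis
  proof cases
    case a
    obtain q where "k = i + q * int n" using a by (rule mod_eq_obtain)
    then have "(k - i + j) mod int n = j mod int n" by simp
    then show ?thesis using a assms unfolding refl_aff_def by auto
  next
    case b
    obtain q where "k = j + q * int n" using b(2) by (rule mod_eq_obtain)
    then have "(k - j + i) mod int n = i mod int n" by simp
    then show ?thesis using b assms unfolding refl_aff_def by auto
  qed (auto simp: refl_aff_def)
qed

lemma refl_aff_bij: "i mod int n \<noteq> j mod int n \<Longrightarrow> bij (refl_aff n i j)"
  by (rule involuntory_imp_bij) (rule refl_aff_invol)

lemma refl_aff_shift:
  assumes "i' mod int n = i mod int n" "j' - i' = j - i"
  shows "refl_aff n i' j' = refl_aff n i j"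
proof -
  obtain q where "i' = i + q * int n" using assms(1) by (rule mod_eq_obtain)
  then have "j' = j + q * int n" using assms(2) by simp
  then have "j' mod int n = j mod int n" by simp
  then show ?thesis using assms unfolding refl_aff_def by (auto simp: fun_eq_iff algebra_simps)
qed

lemma refl_aff_sym: "i mod int n \<noteq> j mod int n \<Longrightarrow> refl_aff n i j = refl_aff n j i"
  unfolding refl_aff_def by (auto simp: fun_eq_iff)

lemma periodic_comp: "periodic n f \<Longrightarrow> periodic n g \<Longrightarrow> periodic n (f \<circ> g)"
  unfolding periodic_def by simp

lemma periodic_id: "periodic n id" unfolding periodic_def by simp

lemma inj_mod:
  assumes "periodic n f" "inj f" "f a mod int n = f b mod int n"
  shows "a mod int n = b mod int n"
proof -
  obtain q where q: "f a = f b + q * int n" using assms(3) by (rule mod_eq_obtain)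
  have "f a = f (b + q * int n)" using periodic_shift[OF assms(1)] q by (simp add: algebra_simps)
  then have "a = b + q * int n" using assms(2) by (simp add: inj_eq)
  then show ?thesis by simp
qed

lemma conj_refl:
  assumes per: "periodic n f" and bf: "bij f" and ij: "i mod int n \<noteq> j mod int n"
  shows "f \<circ> refl_aff n i j \<circ> inv f = refl_aff n (f i) (f j)"
proof
  fix x
  have injf: "inj f" and surjf: "surj f" using bf bij_is_inj bij_is_surj by auto
  define z where "z = inv f x"
  have fz: "f z = x" unfolding z_def using surjf by (simp add: surj_f_inv_f)
  have lhs: "(f \<circ> refl_aff n i j \<circ> inv f) x = f (refl_aff n i j z)" by (simp add: z_def)
  consider (a) "z mod int n = i mod int n" | (b) "z mod int n \<noteq> i mod int n" "z mod int n = j mod int n"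
    | (c) "z mod int n \<noteq> i mod int n" "z mod int n \<noteq> j mod int n" by blast
  then show "(f \<circ> refl_aff n i j \<circ> inv f) x = refl_aff n (f i) (f j) x"
  proof cases
    case a
    obtain q where q: "z = i + q * int n" using a by (rule mod_eq_obtain)
    have x: "x = f i + q * int n" using fz q periodic_shift[OF per] by simp
    have r: "refl_aff n i j z = j + q * int n" using a q unfolding refl_aff_def by simp
    have "f (j + q * int n) = f j + q * int n" using periodic_shift[OF per] by simp
    moreover have "x mod int n = f i mod int n" using x by simp
    ultimately show ?thesis unfolding lhs r using x by (simp add: refl_aff_def)
  next
    case b
    obtain q where q: "z = j + q * int n" using b(2) by (rule mod_eq_obtain)
    have x: "x = f j + q * int n" using fz q periodic_shift[OF per] by simp
    have r: "refl_aff n i j z = i + q * int n" using b q unfolding refl_aff_def by simp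
    have nx: "x mod int n \<noteq> f i mod int n"
    proof
      assume "x mod int n = f i mod int n"
      then have "f z mod int n = f i mod int n" using fz by simp
      then show False using inj_mod[OF per injf] b by blast
    qed
    have "f (i + q * int n) = f i + q * int n" using periodic_shift[OF per] by simp
    moreover have "x mod int n = f j mod int n" using x by simp
    ultimately show ?thesis unfolding lhs r using x nx by (simp add: refl_aff_def)
  next
    case c
    have "x mod int n \<noteq> f i mod int n" "x mod int n \<noteq> f j mod int n"
      using inj_mod[OF per injf] c fz by metis+
    moreover have "refl_aff n i j z = z" using c unfolding refl_aff_def by simp
    ultimately show ?thesis unfolding lhs using fz by (simp add: refl_aff_def)
  qed
qed

fun stm :: "nat \<Rightarrow> (nat \<Rightarrow> bool) \<Rightarrow> nat \<Rightarrow> int \<times> (nat \<Rightarrow> int)" where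
  "stm n sk 0 = (int n, \<lambda>b. int b + 1)"
| "stm n sk (Suc t) = (let (c, B) = stm n sk t; b = t mod (n - 1) in
      if sk t then (B b, B(b := c)) else (c, B))"

definition car :: "nat \<Rightarrow> (nat \<Rightarrow> bool) \<Rightarrow> nat \<Rightarrow> int" where
  "car n sk t = fst (stm n sk t)"
definition box :: "nat \<Rightarrow> (nat \<Rightarrow> bool) \<Rightarrow> nat \<Rightarrow> nat \<Rightarrow> int" where
  "box n sk t = snd (stm n sk t)"

lemma car_0[simp]: "car n sk 0 = int n" by (simp add: car_def)
lemma box_0[simp]: "box n sk 0 b = int b + 1" by (simp add: box_def)
lemma car_Suc: "car n sk (Suc t) = (if sk t then box n sk t (t mod (n - 1)) else car n sk t)"
  by (simp add: car_def box_def Let_def split: prod.splits)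
lemma box_Suc: "box n sk (Suc t) = (if sk t then (box n sk t)(t mod (n - 1) := car n sk t) else box n sk t)"
  by (simp add: car_def box_def Let_def split: prod.splits)

fun Cnt :: "nat \<Rightarrow> (nat \<Rightarrow> bool) \<Rightarrow> int \<Rightarrow> nat \<Rightarrow> nat" where
  "Cnt n sk k 0 = 0"
| "Cnt n sk k (Suc t) = Cnt n sk k t + (if car n sk (Suc t) = k then 1 else 0)"

locale model =
  fixes n :: nat and sk :: "nat \<Rightarrow> bool"
  assumes n2: "n \<ge> 2"
begin

abbreviation "cr \<equiv> car n sk"
abbreviation "bx \<equiv> box n sk"
abbreviation "C \<equiv> Cnt n sk"

lemma perm_inv:
  "cr t \<in> {1..int n} \<and> (\<forall>b<n-1. bx t b \<in> {1..int n}) \<and> cr t \<notin> bx t ` {..<n-1}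
   \<and> inj_on (bx t) {..<n-1}"
proof (induction t)
  case 0
  then show ?case using n2 by (auto simp: inj_on_def)
next
  case (Suc t)
  define b where "b = t mod (n - 1)"
  have b: "b < n - 1" using n2 unfolding b_def by simp
  show ?case
  proof (cases "sk t")
    case False
    then show ?thesis using Suc by (simp add: car_Suc box_Suc)
  next
    case True
    have c1: "cr (Suc t) = bx t b" and b1: "bx (Suc t) = (bx t)(b := cr t)"
      using True by (simp_all add: car_Suc box_Suc b_def)
    have "cr (Suc t) \<in> {1..int n}" using c1 b Suc by auto
    moreover have "\<forall>b'<n-1. bx (Suc t) b' \<in> {1..int n}" using b1 Suc by auto
    moreover have "cr (Suc t) \<notin> bx (Suc t) ` {..<n-1}"
    proof
      assume "cr (Suc t) \<in> bx (Suc t) ` {..<n-1}"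
      then obtain b' where b': "b' < n - 1" "bx (Suc t) b' = bx t b" using c1 by auto
      show False
      proof (cases "b' = b")
        case True then show False using b' b1 Suc b by auto
      next
        case False
        then have "bx t b' = bx t b" using b' b1 by auto
        then show False using Suc b b' False unfolding inj_on_def by auto
      qed
    qed
    moreover have "inj_on (bx (Suc t)) {..<n-1}"
      unfolding inj_on_def
    proof (intro ballI impI)
      fix x y assume xy: "x \<in> {..<n-1}" "y \<in> {..<n-1}" "bx (Suc t) x = bx (Suc t) y"
      show "x = y"
      proof (cases "x = b \<or> y = b")
        case True
        have "\<forall>x<n - 1. bx t x \<noteq> cr t" using Suc by force
        then show ?thesis using xy b1 b True by (auto split: if_splits)
      next
        case False
        then show ?thesis using xy b1 Suc unfolding inj_on_def by auto
      qed
    qed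
    ultimately show ?thesis by blast
  qed
qed

lemma car_range: "cr t \<in> {1..int n}" using perm_inv by blast
lemma box_range: "b < n - 1 \<Longrightarrow> bx t b \<in> {1..int n}" using perm_inv by blast
lemma car_ne_box: "b < n - 1 \<Longrightarrow> cr t \<noteq> bx t b" using perm_inv by blast
lemma box_inj: "b < n - 1 \<Longrightarrow> b' < n - 1 \<Longrightarrow> bx t b = bx t b' \<Longrightarrow> b = b'"
  using perm_inv unfolding inj_on_def by blast

lemma col_lt: "t mod (n - 1) < n - 1" using n2 by simp

lemma C_Suc_same: "cr (Suc t) \<noteq> k \<Longrightarrow> C k (Suc t) = C k t" by simp

lemma cong_inv:
  "(cr t = k \<longrightarrow> (k - 1 + int (C k t)) mod (int n - 1) = int t mod (int n - 1)) \<and>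
   (\<forall>b<n-1. bx t b = k \<longrightarrow> (k - 1 + int (C k t)) mod (int n - 1) = int b mod (int n - 1))"
proof (induction t arbitrary: k)
  case 0
  have "(int n - 1) mod (int n - 1) = 0" by simp
  then show ?case by auto
next
  case (Suc t)
  define b where "b = t mod (n - 1)"
  have b: "b < n - 1" using n2 unfolding b_def by simp
  have bmod: "int b mod (int n - 1) = int t mod (int n - 1)"
    using n2 unfolding b_def by (simp add: zmod_int of_nat_diff)
  have I1: "cr (Suc t) = k \<longrightarrow> (k - 1 + int (C k (Suc t))) mod (int n - 1) = int (Suc t) mod (int n - 1)"
  proof
    assume ck: "cr (Suc t) = k"
    have cs: "C k (Suc t) = C k t + 1" using ck by simp
    have "(k - 1 + int (C k t)) mod (int n - 1) = int t mod (int n - 1)"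
    proof (cases "sk t")
      case False
      then have "cr t = k" using ck by (simp add: car_Suc)
      then show ?thesis using Suc.IH by blast
    next
      case True
      then have "bx t b = k" using ck by (simp add: car_Suc b_def)
      then show ?thesis using Suc.IH b bmod by auto
    qed
    then have "(k - 1 + int (C k t) + 1) mod (int n - 1) = (int t + 1) mod (int n - 1)"
      by (metis mod_add_left_eq)
    then show "(k - 1 + int (C k (Suc t))) mod (int n - 1) = int (Suc t) mod (int n - 1)"
      using cs by (simp add: algebra_simps)
  qed
  have I2: "\<forall>b'<n-1. bx (Suc t) b' = k \<longrightarrow> (k - 1 + int (C k (Suc t))) mod (int n - 1) = int b' mod (int n - 1)"
  proof (intro allI impI)
    fix b' assume b': "b' < n - 1" "bx (Suc t) b' = k"
    have cs: "C k (Suc t) = C k t" using car_ne_box[OF b'(1), of "Suc t"] b'(2) by simp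
    show "(k - 1 + int (C k (Suc t))) mod (int n - 1) = int b' mod (int n - 1)"
    proof (cases "sk t \<and> b' = b")
      case True
      then have "cr t = k" using b' by (simp add: box_Suc b_def)
      then show ?thesis using Suc.IH cs True bmod by auto
    next
      case False
      then have "bx t b' = k" using b' by (auto simp: box_Suc b_def)
      then show ?thesis using Suc.IH cs b' by auto
    qed
  qed
  show ?case using I1 I2 by blast
qed

lemma cong_car: "cr t = k \<Longrightarrow> (k - 1 + int (C k t)) mod (int n - 1) = int t mod (int n - 1)"
  using cong_inv by blast
lemma cong_box: "b < n - 1 \<Longrightarrow> bx t b = k \<Longrightarrow> (k - 1 + int (C k t)) mod (int n - 1) = int b mod (int n - 1)"
  using cong_inv by blast

end

lemma prodw_append: "prodw (xs @ ys) = prodw xs \<circ> prodw ys"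
  unfolding prodw_def by (induction xs) auto

lemma prodw_Nil[simp]: "prodw [] = id" unfolding prodw_def by simp
lemma prodw_Cons: "prodw (x # xs) = x \<circ> prodw xs" unfolding prodw_def by simp
lemma prodw_snoc: "prodw (xs @ [x]) = prodw xs \<circ> x"
  by (simp add: prodw_append prodw_Cons)

lemma upref_0[simp]: "upref u 0 = id" unfolding upref_def by simp
lemma upref_Suc: "t < length u \<Longrightarrow> upref u (Suc t) = upref u t \<circ> u ! t"
  unfolding upref_def by (simp add: take_Suc_conv_app_nth prodw_snoc)

lemma mod_shift_ne: "0 < d \<Longrightarrow> d < int n \<Longrightarrow> (a + d) mod int n \<noteq> a mod int n"
proof
  assume "0 < d" "d < int n" "(a + d) mod int n = a mod int n"
  then have "int n dvd d" by (simp add: mod_eq_dvd_iff)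
  then show False using \<open>0 < d\<close> \<open>d < int n\<close> zdvd_imp_le by fastforce
qed

lemma mod_Suc_ne: "n \<ge> 2 \<Longrightarrow> (a::int) mod int n \<noteq> (a + 1) mod int n"
  using mod_shift_ne[of 1 n a] by simp

lemma sigma_Suc: "n \<ge> 1 \<Longrightarrow> sigma n (Suc t) = refl_aff n (int t) (int t + 1)"
  unfolding sigma_def sgen_def
  by (rule refl_aff_shift) (simp_all add: zmod_int)

lemma refl_at1: "n \<ge> 2 \<Longrightarrow> refl_aff n a (a + 1) (a + 1) = a"
  using mod_Suc_ne[of n a] unfolding refl_aff_def by auto

lemma refl_atn: "n \<ge> 2 \<Longrightarrow> refl_aff n a (a + 1) (a + int n) = a + int n + 1"
  unfolding refl_aff_def by auto

lemma refl_atd: "2 \<le> d \<Longrightarrow> d < int n \<Longrightarrow> refl_aff n a (a + 1) (a + d) = a + d"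
proof -
  assume d: "2 \<le> d" "d < int n"
  have "(a + d) mod int n \<noteq> a mod int n" using mod_shift_ne[of d n a] d by simp
  moreover have "((a + 1) + (d - 1)) mod int n \<noteq> (a + 1) mod int n"
    using mod_shift_ne[of "d - 1" n "a + 1"] d by simp
  ultimately show ?thesis unfolding refl_aff_def by (simp add: algebra_simps)
qed

lemma modn_add_n[simp]: "modn n (x + int n) = modn n x"
proof -
  have "x + int n - 1 = (x - 1) + int n" by simp
  then show ?thesis unfolding modn_def by (metis mod_add_self2)
qed

lemma modn_0: "n \<ge> 1 \<Longrightarrow> modn n 0 = int n"
proof -
  assume n: "n \<ge> 1"
  have "(-1::int) mod int n = int n - 1"
  proof (cases "n = 1")
    case True then show ?thesis by simp
  next
    case False
    then have "(1::int) mod int n = 1" using n by simp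
    then show ?thesis by (simp add: zmod_zminus1_eq_if)
  qed
  then show ?thesis unfolding modn_def by simp
qed

locale walk = model +
  fixes u :: "(int \<Rightarrow> int) list"
  assumes sub: "is_subword n u"
  assumes skdef: "\<And>t. sk t = (u ! t = id)"
begin

abbreviation "T \<equiv> n * (n - 1)"
abbreviation "w \<equiv> upref u"

lemma len_u: "length u = T" using sub unfolding is_subword_def by simp

lemma u_nth: "t < T \<Longrightarrow> u ! t = (if sk t then id else refl_aff n (int t) (int t + 1))"
proof -
  assume t: "t < T"
  have "Suc t \<in> {1..n * (n - 1)}" using t by simp
  then have "u ! t = sigma n (Suc t) \<or> u ! t = id" using sub unfolding is_subword_def by fastforce
  then show ?thesis using sigma_Suc[of n t] n2 skdef by auto
qed

lemma w_props: "t \<le> T \<Longrightarrow> periodic n (w t) \<and> bij (w t)"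
proof (induction t)
  case 0 show ?case unfolding upref_0 using periodic_id bij_id by blast
next
  case (Suc t)
  then have t: "t < T" by simp
  have r: "periodic n (u ! t) \<and> bij (u ! t)"
    using u_nth[OF t] refl_aff_periodic refl_aff_bij mod_Suc_ne n2 by (simp add: periodic_id)
  have e: "w (Suc t) = w t \<circ> u ! t" using upref_Suc[of t u] len_u t by simp
  have "periodic n (w t) \<and> bij (w t)" using Suc.IH t by simp
  then show ?case unfolding e using r periodic_comp bij_comp by blast
qed

lemma w_Suc_skip: "t < T \<Longrightarrow> sk t \<Longrightarrow> w (Suc t) = w t"
  using upref_Suc[of t u] len_u u_nth by simp

lemma w_Suc_keep: "t < T \<Longrightarrow> \<not> sk t \<Longrightarrow> w (Suc t) p = w t (refl_aff n (int t) (int t + 1) p)"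
  using upref_Suc[of t u] len_u u_nth by simp

lemma w_per: "t \<le> T \<Longrightarrow> w t (x + int n) = w t x + int n"
  using w_props unfolding periodic_def by blast

definition V1 :: "nat \<Rightarrow> bool" where
  "V1 t \<longleftrightarrow> modn n (w t (int t)) = cr t \<and>
     (int n - 1) * (w t (int t) - cr t + int n) = int n * (int t - cr t + int n - int (C (cr t) t))"

definition V2 :: "nat \<Rightarrow> nat \<Rightarrow> bool" where
  "V2 t s \<longleftrightarrow> (let e = bx t ((t + s - 1) mod (n - 1)) in
     modn n (w t (int t + int s)) = e \<and>
     (int n - 1) * (w t (int t + int s) - e + int n) = int n * (int t + int s - 1 - e + int n - int (C e t)))"

lemma corr: "t \<le> T \<Longrightarrow> V1 t \<and> (\<forall>s. 1 \<le> s \<and> s \<le> n - 1 \<longrightarrow> V2 t s)"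
proof (induction t)
  case 0
  have "V1 0" unfolding V1_def using modn_0 n2 by simp
  moreover have "V2 0 s" if "1 \<le> s" "s \<le> n - 1" for s
  proof -
    have "(s - 1) mod (n - 1) = s - 1" using that by simp
    moreover have "modn n (int s) = int s" unfolding modn_def using that n2 by simp
    ultimately show ?thesis unfolding V2_def using that by (simp add: of_nat_diff algebra_simps)
  qed
  ultimately show ?case by blast
next
  case (Suc t)
  then have t: "t < T" and IH1: "V1 t" and IH2: "\<And>s. 1 \<le> s \<Longrightarrow> s \<le> n - 1 \<Longrightarrow> V2 t s" by auto
  define b where "b = t mod (n - 1)"
  have b: "b < n - 1" using n2 unfolding b_def by simp
  define c where "c = w t (int t)"
  define y where "y = w t (int t + 1)"
  define e1 where "e1 = bx t b"
  have V21: "V2 t 1" using IH2[of 1] n2 by simp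
  then have y1: "modn n y = e1" and y2: "(int n - 1) * (y - e1 + int n) = int n * (int t - e1 + int n - int (C e1 t))"
    unfolding V2_def y_def e1_def b_def by (simp_all add: Let_def algebra_simps)
  have c1: "modn n c = cr t" and c2: "(int n - 1) * (c - cr t + int n) = int n * (int t - cr t + int n - int (C (cr t) t))"
    using IH1 unfolding V1_def c_def by auto
  have idx_last: "(Suc t + (n - 1) - 1) mod (n - 1) = b" using n2 unfolding b_def
    by (metis Suc_diff_1 add_Suc add_Suc_right diff_Suc_1 mod_add_self2 diff_add_inverse) 
  show ?case
  proof (cases "sk t")
    case False
    have cS: "cr (Suc t) = cr t" and bS: "bx (Suc t) = bx t" using False by (simp_all add: car_Suc box_Suc)
    have CS: "C (cr t) (Suc t) = C (cr t) t + 1" using cS by simp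
    have wS: "\<And>p. w (Suc t) p = w t (refl_aff n (int t) (int t + 1) p)" using w_Suc_keep[OF t False] .
    have "w (Suc t) (int t + 1) = c" using wS refl_at1[OF n2, of "int t"] c_def by simp
    moreover have "int (Suc t) = int t + 1" by simp
    ultimately have "w (Suc t) (int (Suc t)) = c" by metis
    then have "V1 (Suc t)" unfolding V1_def using cS CS c1 c2 by (simp add: algebra_simps)
    moreover have "V2 (Suc t) s" if s: "1 \<le> s" "s \<le> n - 1" for s
    proof (cases "s = n - 1")
      case True
      have pos: "int (Suc t) + int s = int t + int n" using True n2 by simp
      have "w (Suc t) (int (Suc t) + int s) = y + int n"
        unfolding pos wS using refl_atn[OF n2, of "int t"] w_per[of t "int t + 1"] t y_def
        by (simp add: algebra_simps)
      moreover have "bx (Suc t) ((Suc t + s - 1) mod (n - 1)) = e1" using True idx_last bS e1_def by simp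
      moreover have "C e1 (Suc t) = C e1 t" using car_ne_box[OF b, of t] cS e1_def by simp
      ultimately show ?thesis unfolding V2_def Let_def using y1 y2 True n2
        by (simp add: algebra_simps of_nat_diff)
    next
      case False
      then have s': "s + 1 \<le> n - 1" using s by simp
      have "V2 t (s + 1)" using IH2[of "s + 1"] s' by simp
      moreover have "w (Suc t) (int (Suc t) + int s) = w t (int t + int (s + 1))"
        unfolding wS using refl_atd[of "int s + 1" n "int t"] s' s n2
        by (simp add: algebra_simps)
      moreover have "(Suc t + s - 1) = t + (s + 1) - 1" using s by simp
      moreover have "C (bx t ((t + (s + 1) - 1) mod (n - 1))) (Suc t) = C (bx t ((t + (s + 1) - 1) mod (n - 1))) t"
        using car_ne_box[OF col_lt, of "Suc t" "t + (s + 1) - 1"] cS bS by simp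
      ultimately show ?thesis unfolding V2_def Let_def using bS by (simp add: algebra_simps)
    qed
    ultimately show ?thesis by blast
  next
    case True
    have cS: "cr (Suc t) = e1" and bS: "bx (Suc t) = (bx t)(b := cr t)"
      using True by (simp_all add: car_Suc box_Suc e1_def b_def)
    have CS: "C e1 (Suc t) = C e1 t + 1" using cS by simp
    have wS: "w (Suc t) = w t" using w_Suc_skip[OF t True] .
    have "V1 (Suc t)" unfolding V1_def wS using cS CS y1 y2 y_def by (simp add: algebra_simps)
    moreover have "V2 (Suc t) s" if s: "1 \<le> s" "s \<le> n - 1" for s
    proof (cases "s = n - 1")
      case True
      have pos: "int (Suc t) + int s = int t + int n" using True n2 by simp
      have "w (Suc t) (int (Suc t) + int s) = c + int n"
        unfolding pos wS using w_per[of t "int t"] t c_def by simp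
      moreover have "bx (Suc t) ((Suc t + s - 1) mod (n - 1)) = cr t" using True idx_last bS by simp
      moreover have "C (cr t) (Suc t) = C (cr t) t" using car_ne_box[OF b, of "Suc t"] bS by simp
      ultimately show ?thesis unfolding V2_def Let_def using c1 c2 True n2
        by (simp add: algebra_simps of_nat_diff)
    next
      case False
      then have s': "s + 1 \<le> n - 1" using s by simp
      have "V2 t (s + 1)" using IH2[of "s + 1"] s' by simp
      moreover have "w (Suc t) (int (Suc t) + int s) = w t (int t + int (s + 1))"
        unfolding wS by (simp add: algebra_simps)
      moreover have eq: "(Suc t + s - 1) = t + (s + 1) - 1" using s by simp
      moreover have "(t + (s + 1) - 1) mod (n - 1) \<noteq> b"
      proof
        assume "(t + (s + 1) - 1) mod (n - 1) = b"
        then have "(t + s) mod (n - 1) = t mod (n - 1)" unfolding b_def by simp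
        then have "(n - 1) dvd s" using mod_eq_dvd_iff_nat[of t "t + s" "n - 1"] by simp
        then show False using s' s by (simp add: nat_dvd_not_less)
      qed
      moreover have "C (bx (Suc t) ((t + (s + 1) - 1) mod (n - 1))) (Suc t) = C (bx (Suc t) ((t + (s + 1) - 1) mod (n - 1))) t"
        using car_ne_box[OF col_lt, of "Suc t" "t + (s + 1) - 1"] by simp
      ultimately show ?thesis unfolding V2_def Let_def using bS by (simp add: algebra_simps)
    qed
    ultimately show ?thesis by blast
  qed
qed

end

context model begin

lemma car_const: "(\<And>s. t1 \<le> s \<Longrightarrow> s < t2 \<Longrightarrow> \<not> sk s) \<Longrightarrow> t1 \<le> t2 \<Longrightarrow> cr t2 = cr t1"
proof (induction t2)
  case 0 then show ?case by simp
next
  case (Suc t)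
  show ?case
  proof (cases "t1 = Suc t")
    case False
    then have "t1 \<le> t" using Suc by simp
    then show ?thesis using Suc by (simp add: car_Suc)
  qed simp
qed

lemma box_const: "(\<And>s. t1 \<le> s \<Longrightarrow> s < t2 \<Longrightarrow> sk s \<Longrightarrow> s mod (n - 1) \<noteq> b) \<Longrightarrow> t1 \<le> t2 \<Longrightarrow> bx t2 b = bx t1 b"
proof (induction t2)
  case 0 then show ?case by simp
next
  case (Suc t)
  show ?case
  proof (cases "t1 = Suc t")
    case False
    then have "t1 \<le> t" using Suc by simp
    then show ?thesis using Suc by (auto simp: box_Suc)
  qed simp
qed

lemma C_mono: "t1 \<le> t2 \<Longrightarrow> C k t1 \<le> C k t2"
proof (induction t2)
  case 0 then show ?case by simp
next
  case (Suc t) then show ?case by (cases "t1 = Suc t") auto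
qed

lemma C_strict: "t1 < t2 \<Longrightarrow> cr t2 = k \<Longrightarrow> C k t1 < C k t2"
proof -
  assume a: "t1 < t2" "cr t2 = k"
  then obtain t where t: "t2 = Suc t" "t1 \<le> t" by (cases t2) auto
  then show ?thesis using a C_mono[of t1 t k] by simp
qed

lemma C_const: "(\<And>s. t1 < s \<Longrightarrow> s \<le> t2 \<Longrightarrow> cr s \<noteq> k) \<Longrightarrow> t1 \<le> t2 \<Longrightarrow> C k t2 = C k t1"
proof (induction t2)
  case 0 then show ?case by simp
next
  case (Suc t)
  show ?case
  proof (cases "t1 = Suc t")
    case False
    then have "t1 \<le> t" using Suc by simp
    then show ?thesis using Suc by simp
  qed simp
qed

lemma C_pos: "1 \<le> t \<Longrightarrow> cr t = k \<Longrightarrow> C k t \<ge> 1"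
  using C_strict[of 0 t k] by simp

end

lemma dvd_small_zero: "(m::int) dvd x \<Longrightarrow> 0 \<le> x \<Longrightarrow> x < m \<Longrightarrow> x = 0"
proof (rule ccontr)
  assume d: "m dvd x" and x: "0 \<le> x" "x < m" "x \<noteq> 0"
  then have "0 < x" by simp
  then have "m \<le> x" using zdvd_imp_le[OF d] by simp
  then show False using x by simp
qed

lemma mod_same_dvd: "((a::int) + x) mod m = a mod m \<Longrightarrow> m dvd x"
proof -
  assume "(a + x) mod m = a mod m"
  then have "m dvd (a + x) - a" by (simp only: mod_eq_dvd_iff)
  then show ?thesis by simp
qed

locale final = model +
  assumes skcount: "card {t. t < n * (n - 1) \<and> sk t} = 2 * n - 2"
  assumes carT: "car n sk (n * (n - 1)) = int n"
  assumes boxT: "\<And>b. b < n - 1 \<Longrightarrow> box n sk (n * (n - 1)) b = int b + 1"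
  assumes CT: "\<And>k. k \<in> {1..int n} \<Longrightarrow> Cnt n sk k (n * (n - 1)) = n - 1"
begin

abbreviation "TT \<equiv> n * (n - 1)"
definition SKb :: "nat \<Rightarrow> nat set" where "SKb b = {t. t < TT \<and> sk t \<and> t mod (n - 1) = b}"

lemma SKb_finite: "finite (SKb b)" unfolding SKb_def by simp

lemma col_ge1: "b < n - 1 \<Longrightarrow> SKb b \<noteq> {}"
proof
  assume b: "b < n - 1" and e: "SKb b = {}"
  have bxc: "bx t b = int b + 1" if "t \<le> TT" for t
    using box_const[of 0 t b] e that unfolding SKb_def by auto
  have "C (int b + 1) TT = 0"
  proof -
    have ne: "cr s \<noteq> int b + 1" if "s \<le> TT" for s
      using bxc[OF that] car_ne_box[OF b, of s] by simp
    have "C (int b + 1) TT = C (int b + 1) 0"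
      by (rule C_const) (use ne in auto)
    then show ?thesis by simp
  qed
  moreover have "C (int b + 1) TT = n - 1" using CT[of "int b + 1"] b by simp
  ultimately show False using b by simp
qed

lemma col_ge2: "b < n - 1 \<Longrightarrow> card (SKb b) \<ge> 2"
proof (rule ccontr)
  assume b: "b < n - 1" and c: "\<not> card (SKb b) \<ge> 2"
  have "card (SKb b) \<noteq> 0" using col_ge1[OF b] SKb_finite by simp
  then have "card (SKb b) = 1" using c by simp
  then obtain \<tau> where tau: "SKb b = {\<tau>}" by (metis card_1_singletonE)
  then have t: "\<tau> < TT" "sk \<tau>" "\<tau> mod (n - 1) = b" unfolding SKb_def by auto
  have mem: "\<And>s. s < TT \<Longrightarrow> sk s \<Longrightarrow> s mod (n - 1) = b \<Longrightarrow> s = \<tau>"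
    using tau unfolding SKb_def by blast
  have "bx TT b = bx (Suc \<tau>) b"
  proof (rule box_const)
    fix s assume "Suc \<tau> \<le> s" "s < TT" "sk s" then show "s mod (n - 1) \<noteq> b" using mem by fastforce
  qed (use t in simp)
  also have "\<dots> = cr \<tau>" using t by (simp add: box_Suc)
  finally have 1: "bx TT b = cr \<tau>" .
  have "bx \<tau> b = bx 0 b"
  proof (rule box_const)
    fix s assume s: "0 \<le> s" "s < \<tau>" "sk s"
    show "s mod (n - 1) \<noteq> b"
    proof
      assume "s mod (n - 1) = b"
      then have "s = \<tau>" using mem[of s] s t by simp
      then show False using s by simp
    qed
  qed simp
  then have "bx \<tau> b = int b + 1" by simp
  then have "cr \<tau> \<noteq> int b + 1" using car_ne_box[OF b, of \<tau>] by simp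
  then show False using 1 boxT[OF b] by simp
qed

lemma col_eq2: "b < n - 1 \<Longrightarrow> card (SKb b) = 2"
proof -
  assume b: "b < n - 1"
  have U: "{t. t < TT \<and> sk t} = (\<Union>b'\<in>{..<n-1}. SKb b')"
  proof (rule set_eqI)
    fix x
    have "x mod (n - 1) < n - 1" using col_lt .
    then show "x \<in> {t. t < TT \<and> sk t} \<longleftrightarrow> x \<in> (\<Union>b'\<in>{..<n-1}. SKb b')"
      unfolding SKb_def by blast
  qed
  have "card {t. t < TT \<and> sk t} = (\<Sum>b'\<in>{..<n-1}. card (SKb b'))"
    unfolding U by (rule card_UN_disjoint) (auto simp: SKb_def SKb_finite)
  then have S: "(\<Sum>b'\<in>{..<n-1}. card (SKb b')) = 2 * (n - 1)" using skcount by simp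
  have "(\<Sum>b'\<in>{..<n-1}. card (SKb b') - 2) = (\<Sum>b'\<in>{..<n-1}. card (SKb b')) - (\<Sum>b'\<in>{..<n-1}. 2)"
    by (rule sum_subtractf_nat) (use col_ge2 in auto)
  also have "\<dots> = 0" using S by simp
  finally have "\<forall>b'\<in>{..<n-1}. card (SKb b') - 2 = 0" by simp
  then have "card (SKb b) - 2 = 0" using b by blast
  then show ?thesis using col_ge2[OF b] by simp
qed

lemma first_box: assumes b: "b < n - 1" and tau: "\<tau> \<in> SKb b" and sig: "\<sigma> \<in> SKb b" and lt: "\<tau> < \<sigma>"
  shows "bx \<tau> b = int b + 1"
proof -
  have "SKb b = {\<tau>, \<sigma>}"
  proof -
    have "{\<tau>, \<sigma>} \<subseteq> SKb b" using tau sig by auto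
    moreover have "card {\<tau>, \<sigma>} = card (SKb b)" using col_eq2[OF b] lt by simp
    ultimately show ?thesis using SKb_finite by (metis card_subset_eq)
  qed
  then have mem: "\<And>s. s < TT \<Longrightarrow> sk s \<Longrightarrow> s mod (n - 1) = b \<Longrightarrow> s = \<tau> \<or> s = \<sigma>"
    unfolding SKb_def by blast
  have tT: "\<tau> < TT" using tau unfolding SKb_def by blast
  have "bx \<tau> b = bx 0 b"
  proof (rule box_const)
    fix s assume s: "0 \<le> s" "s < \<tau>" "sk s"
    show "s mod (n - 1) \<noteq> b"
    proof
      assume "s mod (n - 1) = b"
      then have "s = \<tau> \<or> s = \<sigma>" using mem[of s] s tT by simp
      then show False using s lt by auto
    qed
  qed simp
  then show ?thesis by simp
qed

lemma C_le: "t \<le> TT \<Longrightarrow> C (cr t') t \<le> n - 1"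
  using C_mono[of t TT "cr t'"] CT[of "cr t'"] car_range by simp

lemma open_lem:
  assumes t: "\<tau> < TT" "sk \<tau>" and k: "cr \<tau> = k" and Ck: "C k \<tau> < n - 1"
  shows "bx \<tau> (\<tau> mod (n - 1)) = int (\<tau> mod (n - 1)) + 1"
proof -
  define b where "b = \<tau> mod (n - 1)"
  have b: "b < n - 1" using col_lt b_def by simp
  have tin: "\<tau> \<in> SKb b" using t unfolding SKb_def b_def by simp
  show ?thesis
  proof (cases "\<exists>\<sigma>\<in>SKb b. \<tau> < \<sigma>")
    case True
    then show ?thesis using first_box[OF b tin] b_def by auto
  next
    case False
    have nos: "\<And>s. \<tau> < s \<Longrightarrow> s < TT \<Longrightarrow> sk s \<Longrightarrow> s mod (n - 1) \<noteq> b"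
      using False unfolding SKb_def by blast
    have bxe: "bx t b = bx (Suc \<tau>) b" if "Suc \<tau> \<le> t" "t \<le> TT" for t
    proof (rule box_const)
      fix s assume "Suc \<tau> \<le> s" "s < t" "sk s"
      then show "s mod (n - 1) \<noteq> b" using nos that by simp
    qed (use that in simp)
    have bS: "bx (Suc \<tau>) b = k" using t k by (simp add: box_Suc b_def)
    have ne: "cr t \<noteq> k" if "\<tau> < t" "t \<le> TT" for t
    proof -
      have "bx t b = k" using bxe[of t] that bS by simp
      then show ?thesis using car_ne_box[OF b, of t] by simp
    qed
    have "C k TT = C k \<tau>" using C_const[OF ne] t by simp
    moreover have "C k TT = n - 1" using CT[of k] car_range k by blast
    ultimately show ?thesis using Ck by simp
  qed
qed

lemma C_next_le: assumes "\<tau> < TT" shows "C (cr (Suc \<tau>)) \<tau> \<le> n - 2"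
proof -
  have "C (cr (Suc \<tau>)) (Suc \<tau>) = C (cr (Suc \<tau>)) \<tau> + 1" by simp
  moreover have "C (cr (Suc \<tau>)) (Suc \<tau>) \<le> n - 1" using C_le[of "Suc \<tau>" "Suc \<tau>"] assms by simp
  ultimately show ?thesis by simp
qed

lemma orient:
  assumes t: "\<tau> < TT" "sk \<tau>"
  shows "0 < cr \<tau> - cr (Suc \<tau>) + int n * (int (C (cr \<tau>) \<tau>) - int (C (cr (Suc \<tau>)) \<tau>))"
proof -
  define e1 where "e1 = cr \<tau>"
  define e2 where "e2 = cr (Suc \<tau>)"
  have r1: "1 \<le> e1" "e1 \<le> int n" and r2: "1 \<le> e2" "e2 \<le> int n" using car_range e1_def e2_def by auto
  have C2: "C e2 \<tau> \<le> n - 2" using C_next_le[OF t(1)] e2_def by simp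
  have C1: "C e1 \<tau> \<le> n - 1" using C_le[of \<tau> \<tau>] t e1_def by simp
  show ?thesis
  proof (cases "C e1 \<tau> = n - 1")
    case True
    then have "int (C e1 \<tau>) - int (C e2 \<tau>) \<ge> 1" using C2 n2 by linarith
    then have "int n * 1 \<le> int n * (int (C e1 \<tau>) - int (C e2 \<tau>))" by (intro mult_left_mono) auto
    then have "int n * (int (C e1 \<tau>) - int (C e2 \<tau>)) \<ge> int n" by simp
    then have "0 < e1 - e2 + int n * (int (C e1 \<tau>) - int (C e2 \<tau>))" using r1 r2 by linarith
    then show ?thesis unfolding e1_def e2_def .
  next
    case False
    then have lt: "C e1 \<tau> < n - 1" using C1 by simp
    define b where "b = \<tau> mod (n - 1)"
    have b: "b < n - 1" using col_lt b_def by simp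
    have op: "bx \<tau> b = int b + 1" using open_lem[OF t e1_def[symmetric] lt] b_def by simp
    have e2b: "e2 = int b + 1" using op t by (simp add: e2_def car_Suc b_def)
    have "(e2 - 1 + int (C e2 \<tau>)) mod (int n - 1) = int b mod (int n - 1)"
      using cong_box[OF b, of \<tau> e2] op e2b by simp
    moreover have "e2 - 1 = int b" using e2b by simp
    ultimately have "(int b + int (C e2 \<tau>)) mod (int n - 1) = int b mod (int n - 1)" by simp
    then have d: "(int n - 1) dvd int (C e2 \<tau>)" by (rule mod_same_dvd)
    have l: "int (C e2 \<tau>) < int n - 1" using C2 n2 by linarith
    have "int (C e2 \<tau>) = 0" using dvd_small_zero[OF d _ l] by simp
    then have C20: "C e2 \<tau> = 0" by simp
    show ?thesis
    proof (cases "\<tau> = 0")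
      case True
      then have "e1 = int n" using e1_def by simp
      moreover have "e2 \<le> int n - 1" using e2b b by linarith
      ultimately have "0 < e1 - e2 + int n * (int (C e1 \<tau>) - int (C e2 \<tau>))" using C20 True by simp
      then show ?thesis unfolding e1_def e2_def .
    next
      case False
      then have "C e1 \<tau> \<ge> 1" using C_pos[of \<tau> e1] e1_def by simp
      then have "int n * 1 \<le> int n * int (C e1 \<tau>)" by (intro mult_left_mono) auto
      then have "int n * int (C e1 \<tau>) \<ge> int n" by simp
      moreover have "int n * (int (C e1 \<tau>) - int (C e2 \<tau>)) = int n * int (C e1 \<tau>)" using C20 by simp
      ultimately have "0 < e1 - e2 + int n * (int (C e1 \<tau>) - int (C e2 \<tau>))" using r1 r2 by linarith
      then show ?thesis unfolding e1_def e2_def .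
    qed
  qed
qed

lemma drop_next:
  assumes t: "\<tau> < TT" "sk \<tau>" and k: "cr \<tau> = k" and Ck: "C k \<tau> < n - 1"
  shows "cr (Suc \<tau>) = (k - 1 + int (C k \<tau>)) mod (int n - 1) + 1"
proof -
  define b where "b = \<tau> mod (n - 1)"
  have b: "b < n - 1" using col_lt b_def by simp
  have "cr (Suc \<tau>) = int b + 1" using open_lem[OF t k Ck] t by (simp add: car_Suc b_def)
  moreover have "(k - 1 + int (C k \<tau>)) mod (int n - 1) = int \<tau> mod (int n - 1)" using cong_car[OF k] by simp
  moreover have "int \<tau> mod (int n - 1) = int b" using n2 unfolding b_def by (simp add: zmod_int of_nat_diff)
  ultimately show ?thesis by linarith
qed

lemma drop_root:
  assumes t: "\<tau> < TT" "sk \<tau>" and k: "cr \<tau> = int n"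
  shows "C (int n) \<tau> < n - 1 \<and> cr (Suc \<tau>) = int (C (int n) \<tau>) + 1"
proof -
  have "C (int n) \<tau> < C (int n) TT" using C_strict[OF t(1) carT] .
  then have lt: "C (int n) \<tau> < n - 1" using CT[of "int n"] n2 by simp
  have "cr (Suc \<tau>) = (int n - 1 + int (C (int n) \<tau>)) mod (int n - 1) + 1" using drop_next[OF t k lt] by simp
  also have "\<dots> = int (C (int n) \<tau>) mod (int n - 1) + 1" by (metis add.commute mod_add_self2)
  also have "\<dots> = int (C (int n) \<tau>) + 1" using lt n2 by (simp add: mod_pos_pos_trivial)
  finally show ?thesis using lt by simp
qed

lemma last_drop:
  assumes k: "k \<in> {1..<int n}"
  shows "\<exists>\<tau><TT. sk \<tau> \<and> cr \<tau> = k \<and> C k \<tau> = n - 1"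
proof -
  define S where "S = {s. s \<le> TT \<and> cr s = k}"
  have fin: "finite S" by (rule finite_subset[of _ "{..TT}"]) (auto simp: S_def)
  have "S \<noteq> {}"
  proof
    assume "S = {}"
    then have "\<And>s. s \<le> TT \<Longrightarrow> cr s \<noteq> k" unfolding S_def by blast
    then have "C k TT = C k 0" by (intro C_const) auto
    then show False using CT[of k] k n2 by simp
  qed
  define \<tau> where "\<tau> = Max S"
  have tS: "\<tau> \<in> S" using fin \<open>S \<noteq> {}\<close> \<tau>_def by simp
  have mx: "\<And>s. s \<in> S \<Longrightarrow> s \<le> \<tau>" using fin \<tau>_def by simp
  have "\<tau> \<noteq> TT" using tS carT k unfolding S_def by auto
  then have tl: "\<tau> < TT" using tS unfolding S_def by simp
  have nS: "cr s \<noteq> k" if "\<tau> < s" "s \<le> TT" for s using mx[of s] that unfolding S_def by auto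
  have "sk \<tau>"
  proof (rule ccontr)
    assume "\<not> sk \<tau>"
    then have "cr (Suc \<tau>) = k" using tS by (simp add: car_Suc S_def)
    then show False using nS[of "Suc \<tau>"] tl by simp
  qed
  moreover have "C k TT = C k \<tau>" by (rule C_const) (use nS tl in auto)
  moreover have "cr \<tau> = k" using tS unfolding S_def by blast
  moreover have "C k TT = n - 1" using CT[of k] k by simp
  ultimately show ?thesis using tl by metis
qed

end

lemma mod_shift_eq: "(k::int) mod int n = r \<Longrightarrow> 0 \<le> r + d \<Longrightarrow> r + d < int n \<Longrightarrow> (k + d) mod int n = r + d"
proof -
  assume a: "k mod int n = r" "0 \<le> r + d" "r + d < int n"
  have "k = k div int n * int n + r" using a(1) by (metis div_mult_mod_eq)
  then have e: "k + d = (r + d) + (k div int n) * int n" by (simp add: algebra_simps)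
  have "(k + d) mod int n = ((r + d) + (k div int n) * int n) mod int n" by (simp only: e)
  also have "\<dots> = (r + d) mod int n" by (rule mod_mult_self1)
  finally show ?thesis using a by simp
qed

definition Pm :: "nat \<Rightarrow> nat \<Rightarrow> int \<Rightarrow> int" where
  "Pm n m = prodw (map (\<lambda>i. sgen n (int i)) [0..<m])"

lemma Pm_Suc: "Pm n (Suc m) = Pm n m \<circ> sgen n (int m)"
  unfolding Pm_def by (simp add: prodw_snoc)

lemma Pm_formula:
  assumes n2: "n \<ge> 2" and m: "1 \<le> m" "m \<le> n - 1"
  shows "Pm n m k = (if k mod int n = 0 then k + 1 else if k mod int n < int m then k + 1
                     else if k mod int n = int m then k - int m else k)"
  using m
proof (induction m arbitrary: k)
  case 0 then show ?case by simp
next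
  case (Suc m)
  have npos: "int n > 0" using n2 by simp
  have r0: "0 \<le> k mod int n" "k mod int n < int n" using npos by simp_all
  show ?case
  proof (cases "m = 0")
    case True
    have "Pm n 1 = sgen n 0" unfolding Pm_def by (simp add: prodw_Cons)
    moreover have "(1::int) mod int n = 1" using n2 by simp
    ultimately show ?thesis using True r0 unfolding sgen_def refl_aff_def by auto
  next
    case False
    then have m1: "1 \<le> m" "m \<le> n - 1" using Suc.prems by auto
    have IH: "\<And>k. Pm n m k = (if k mod int n = 0 then k + 1 else if k mod int n < int m then k + 1
                     else if k mod int n = int m then k - int m else k)" using Suc.IH[OF m1] .
    have mm: "int m mod int n = int m" "(int m + 1) mod int n = int m + 1" using Suc.prems n2 by simp_all
    have "Pm n (Suc m) k = Pm n m (sgen n (int m) k)" by (simp add: Pm_Suc)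
    also have "\<dots> = (if k mod int n = 0 then k + 1 else if k mod int n < int (Suc m) then k + 1
                     else if k mod int n = int (Suc m) then k - int (Suc m) else k)"
    proof -
      consider (a) "k mod int n = int m" | (b) "k mod int n = int m + 1" | (c) "k mod int n \<noteq> int m" "k mod int n \<noteq> int m + 1" by blast
      then show ?thesis
      proof cases
        case a
        have s: "sgen n (int m) k = k + 1" unfolding sgen_def refl_aff_def using a mm by simp
        have "(k + 1) mod int n = int m + 1" using mod_shift_eq[OF a] Suc.prems n2 by simp
        then show ?thesis unfolding s IH using a by simp
      next
        case b
        have s: "sgen n (int m) k = k - 1" unfolding sgen_def refl_aff_def using b mm by simp
        have "(k + (-1)) mod int n = int m" using mod_shift_eq[OF b, of "-1"] Suc.prems n2 by simp
        then have "(k - 1) mod int n = int m" by simp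
        then show ?thesis unfolding s IH using b False by simp
      next
        case c
        have s: "sgen n (int m) k = k" unfolding sgen_def refl_aff_def using c mm by simp
        show ?thesis unfolding s IH using c by auto
      qed
    qed
    finally show ?thesis .
  qed
qed

definition cfun :: "nat \<Rightarrow> int \<Rightarrow> int" where
  "cfun n = Pm n n"

lemma cfun_formula:
  assumes n2: "n \<ge> 2"
  shows "cfun n k = (if k mod int n = 0 then k - int n else if k mod int n = int n - 1 then k + 2 else k + 1)"
proof -
  have npos: "int n > 0" using n2 by simp
  have e: "n = Suc (n - 1)" using n2 by simp
  have ceq: "cfun n k = Pm n (n - 1) (sgen n (int (n - 1)) k)"
    unfolding cfun_def by (subst e) (simp add: Pm_Suc)
  have IH: "\<And>k. Pm n (n - 1) k = (if k mod int n = 0 then k + 1 else if k mod int n < int (n - 1) then k + 1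
                     else if k mod int n = int (n - 1) then k - int (n - 1) else k)"
    using Pm_formula[OF n2, of "n - 1"] n2 by simp
  have nn: "int (n - 1) = int n - 1" "int (n - 1) + 1 = int n" using n2 by simp_all
  have nm: "(int n - 1) mod int n = int n - 1" by (rule mod_pos_pos_trivial) (use n2 in simp_all)
  have nm2: "int n mod int n = 0" by simp
  consider (a) "k mod int n = int n - 1" | (b) "k mod int n = 0" | (c) "k mod int n \<noteq> int n - 1" "k mod int n \<noteq> 0" by blast
  then show ?thesis
  proof cases
    case a
    have s: "sgen n (int (n - 1)) k = k + 1" unfolding sgen_def refl_aff_def using a nn nm nm2 by simp
    have "(k + 1) mod int n = (k mod int n + 1) mod int n" by (simp add: mod_add_left_eq)
    then have "(k + 1) mod int n = 0" using a by simp
    then show ?thesis unfolding ceq s IH using a n2 by simp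
  next
    case b
    have s: "sgen n (int (n - 1)) k = k - 1" unfolding sgen_def refl_aff_def using b nn nm nm2 n2 by simp
    have "(k - 1) mod int n = (k mod int n - 1) mod int n" by (simp add: mod_diff_left_eq)
    also have "\<dots> = (-1) mod int n" using b by simp
    also have "\<dots> = int n - 1" using n2 by (simp add: zmod_zminus1_eq_if)
    finally have "(k - 1) mod int n = int (n - 1)" using nn by simp
    then show ?thesis unfolding ceq s IH using b nn n2 by simp
  next
    case c
    have s: "sgen n (int (n - 1)) k = k" unfolding sgen_def refl_aff_def using c nn nm nm2 by simp
    have "k mod int n < int n - 1" using c npos pos_mod_bound[of "int n" k] by linarith
    then show ?thesis unfolding ceq s IH using c nn by simp
  qed
qed

lemma cpow_formula:
  assumes n2: "n \<ge> 2" and m: "m \<le> n - 1"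
  shows "(cfun n ^^ m) k = (if k mod int n = 0 then k - int m * int n
                           else k + int m + (if k mod int n + int m \<ge> int n then 1 else 0))"
  using m
proof (induction m)
  case 0
  have "k mod int n < int n" using n2 by simp
  then show ?case by simp
next
  case (Suc m)
  have npos: "int n > 0" using n2 by simp
  define r where "r = k mod int n"
  have r: "0 \<le> r" "r < int n" using npos r_def by simp_all
  have IH: "(cfun n ^^ m) k = (if r = 0 then k - int m * int n else k + int m + (if r + int m \<ge> int n then 1 else 0))"
    using Suc r_def by simp
  have step: "(cfun n ^^ Suc m) k = cfun n ((cfun n ^^ m) k)" by simp
  show ?case
  proof (cases "r = 0")
    case True
    have "(k - int m * int n) mod int n = 0" using True r_def by (simp add: mod_diff_eq[symmetric])
    then have "cfun n (k - int m * int n) = k - int m * int n - int n" using cfun_formula[OF n2] by simp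
    then show ?thesis unfolding step IH using True r_def by (simp add: algebra_simps)
  next
    case False
    have mlt: "int m + 1 \<le> int n - 1" using Suc.prems n2 by simp
    show ?thesis
    proof (cases "r + int m \<ge> int n")
      case True
      have "(k + (int m + 1)) mod int n = r + int m + 1 - int n"
      proof -
        have "(k + (int m + 1)) mod int n = (r + (int m + 1)) mod int n" unfolding r_def by (simp add: mod_add_left_eq)
        also have "\<dots> = (r + int m + 1 - int n) mod int n" by (metis minus_mod_self2 add.assoc)
        also have "\<dots> = r + int m + 1 - int n" by (rule mod_pos_pos_trivial) (use True r mlt in linarith)+
        finally show ?thesis .
      qed
      moreover have "r + int m + 1 - int n \<noteq> 0" "r + int m + 1 - int n \<noteq> int n - 1" using True r mlt by linarith+
      ultimately have "cfun n (k + (int m + 1)) = k + (int m + 1) + 1" using cfun_formula[OF n2] by simp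
      moreover have "(cfun n ^^ m) k = k + (int m + 1)" using IH True False by simp
      ultimately show ?thesis unfolding step using True False r_def by simp
    next
      case nT: False
      have mk: "(k + int m) mod int n = r + int m"
        using mod_shift_eq[of k n r "int m"] r_def r nT by simp
      have IHk: "(cfun n ^^ m) k = k + int m" using IH False nT by simp
      show ?thesis
      proof (cases "r + int m = int n - 1")
        case True
        then have "cfun n (k + int m) = k + int m + 2" using cfun_formula[OF n2] mk False r by simp
        then show ?thesis unfolding step IHk using True False r_def by simp
      next
        case F2: False
        have "r + int m \<noteq> 0" using False r by simp
        then have "cfun n (k + int m) = k + int m + 1" using cfun_formula[OF n2] mk F2 by simp
        then show ?thesis unfolding step IHk using F2 nT False r_def by simp
      qed
    qed
  qed
qed

lemma cpow_lambda: "n \<ge> 2 \<Longrightarrow> cfun n ^^ (n - 1) = lambda_aff n"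
proof
  fix k assume n2: "n \<ge> 2"
  have npos: "int n > 0" using n2 by simp
  have r: "k mod int n < int n" "k mod int n \<ge> 0" using npos by simp_all
  have e: "int (n - 1) = int n - 1" using n2 by simp
  show "(cfun n ^^ (n - 1)) k = lambda_aff n k"
  proof (cases "k mod int n = 0")
    case True then show ?thesis unfolding cpow_formula[OF n2 le_refl] lambda_aff_def e by (simp add: algebra_simps)
  next
    case False
    then have "k mod int n \<ge> 1" using r by simp
    then have "k mod int n + (int n - 1) \<ge> int n" by simp
    then show ?thesis unfolding cpow_formula[OF n2 le_refl] lambda_aff_def e using False by simp
  qed
qed

lemma word_prod:
  assumes n1: "n \<ge> 1"
  shows "prodw (map (\<lambda>j. sigma n (Suc j)) [0..<n * m]) = cfun n ^^ m"
proof (induction m)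
  case 0 then show ?case by simp
next
  case (Suc m)
  have e: "n * Suc m = n * m + n" by simp
  have "[0..<n * Suc m] = [0..<n * m] @ [n * m..<n * m + n]" unfolding e by (rule upt_add_eq_append) simp
  moreover have "map (\<lambda>j. sigma n (Suc j)) [n * m..<n * m + n] = map (\<lambda>i. sgen n (int i)) [0..<n]"
  proof -
    have "[n * m..<n * m + n] = map (\<lambda>i. n * m + i) [0..<n]" by (rule nth_equalityI) auto
    moreover have "sigma n (Suc (n * m + i)) = sgen n (int i)" if "i < n" for i
      unfolding sigma_def using that by simp
    ultimately show ?thesis by simp
  qed
  ultimately have "prodw (map (\<lambda>j. sigma n (Suc j)) [0..<n * Suc m]) = prodw (map (\<lambda>j. sigma n (Suc j)) [0..<n * m]) \<circ> cfun n"
    unfolding cfun_def Pm_def by (simp add: prodw_append)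
  also have "\<dots> = cfun n ^^ m \<circ> cfun n" using Suc by simp
  also have "\<dots> = cfun n ^^ Suc m" by (simp only: funpow_Suc_right)
  finally show ?case .
qed

lemma dropWhile_gt:
  "sorted_wrt (\<lambda>x y. h x < h y) xs \<Longrightarrow> x \<in> set (dropWhile (\<lambda>x. h x \<le> (c::int)) xs) \<Longrightarrow> c < h x"
proof (induction xs)
  case Nil then show ?case by simp
next
  case (Cons a xs)
  show ?case
  proof (cases "h a \<le> c")
    case True then show ?thesis using Cons by simp
  next
    case False
    then have "x = a \<or> x \<in> set xs" using Cons.prems by simp
    then show ?thesis using False Cons.prems by auto
  qed
qed

context final begin

definition taus :: "nat list" where "taus = filter sk [0..<TT]"

lemma taus_sorted: "sorted_wrt (<) taus" unfolding taus_def by (rule sorted_wrt_filter) simp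

lemma taus_mem: "t \<in> set taus \<longleftrightarrow> t < TT \<and> sk t" unfolding taus_def by auto

lemma root_sorted: "sorted_wrt (<) (map (\<lambda>t. cr (Suc t)) (filter (\<lambda>t. cr t = int n) taus))"
proof -
  have s: "sorted_wrt (<) (filter (\<lambda>t. cr t = int n) taus)" using taus_sorted by (rule sorted_wrt_filter)
  show ?thesis unfolding sorted_wrt_map
  proof (rule sorted_wrt_mono_rel[OF _ s])
    fix x y assume xy: "x \<in> set (filter (\<lambda>t. cr t = int n) taus)" "y \<in> set (filter (\<lambda>t. cr t = int n) taus)" "x < y"
    then have x: "x < TT" "sk x" "cr x = int n" and y: "y < TT" "sk y" "cr y = int n" using taus_mem by auto
    have "C (int n) x < C (int n) y" using C_strict[OF xy(3) y(3)] .
    then show "cr (Suc x) < cr (Suc y)" using drop_root[OF x(1,2,3)] drop_root[OF y(1,2,3)] by simp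
  qed
qed

lemma cyc_k:
  assumes k: "k \<in> {1..<int n}"
  shows "cyc_cond k (map (\<lambda>t. cr (Suc t)) (filter (\<lambda>t. cr t = k) taus))"
proof -
  define D where "D = filter (\<lambda>t. cr t = k) taus"
  define f where "f = (\<lambda>t. C k t)"
  define g where "g = (\<lambda>t. cr (Suc t))"
  have Dmem: "x \<in> set D \<Longrightarrow> x < TT \<and> sk x \<and> cr x = k" for x unfolding D_def using taus_mem by auto
  have Dsorted: "sorted_wrt (<) D" unfolding D_def using taus_sorted by (rule sorted_wrt_filter)
  have fsorted: "sorted_wrt (\<lambda>x y. f x < f y) D"
  proof (rule sorted_wrt_mono_rel[OF _ Dsorted])
    fix x y assume "x \<in> set D" "y \<in> set D" "x < y"
    then show "f x < f y" unfolding f_def using C_strict Dmem by blast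
  qed
  have fle: "f x \<le> n - 1" if "x \<in> set D" for x
    using C_le[of x x] Dmem[OF that] unfolding f_def by simp
  have fge: "f x \<ge> 1" if "x \<in> set D" for x
  proof -
    have "x \<noteq> 0"
    proof
      assume "x = 0"
      then have "cr x = int n" by simp
      then show False using Dmem[OF that] k by simp
    qed
    then show ?thesis using C_pos[of x k] Dmem[OF that] unfolding f_def by simp
  qed
  obtain tL where tL: "tL \<in> set D" "f tL = n - 1"
    using last_drop[OF k] taus_mem unfolding D_def f_def by auto
  have Dne: "D \<noteq> []" using tL by auto
  define D' where "D' = butlast D"
  have Deq: "D = D' @ [last D]" unfolding D'_def using Dne by simp
  have lastD: "last D = tL"
  proof (rule ccontr)
    assume ne: "last D \<noteq> tL"
    then have "tL \<in> set D'" using tL(1) Deq by (metis rotate1.simps(2) set_ConsD set_rotate1)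
    then have "f tL < f (last D)" using fsorted Deq by (metis sorted_wrt_append list.set_intros(1))
    moreover have "f (last D) \<le> n - 1" using fle Dne by simp
    ultimately show False using tL by simp
  qed
  have D'mem: "x \<in> set D' \<Longrightarrow> x \<in> set D" for x using Deq by (metis Un_iff set_append)
  have D'lt: "f x < n - 1" if "x \<in> set D'" for x
    using fsorted Deq that lastD tL(2) by (metis sorted_wrt_append list.set_intros(1))
  have gD': "g x = (k - 1 + int (f x)) mod (int n - 1) + 1" if "x \<in> set D'" for x
    using drop_next[of x k] Dmem[OF D'mem[OF that]] D'lt[OF that] unfolding g_def f_def by simp
  define Pb where "Pb = (\<lambda>x. k + int (f x) \<le> int n - 1)"
  define B where "B = takeWhile Pb D'"
  define S where "S = dropWhile Pb D'"
  have D'BS: "D' = B @ S" unfolding B_def S_def by simp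
  have Bmem: "x \<in> set B \<Longrightarrow> x \<in> set D' \<and> Pb x" for x unfolding B_def
    by (meson set_takeWhileD)
  have fsD': "sorted_wrt (\<lambda>x y. f x < f y) D'" using fsorted Deq by (metis sorted_wrt_append)
  have fsD'i: "sorted_wrt (\<lambda>x y. k + int (f x) < k + int (f y)) D'"
    by (rule sorted_wrt_mono_rel[OF _ fsD']) simp
  have Smem: "x \<in> set S \<Longrightarrow> x \<in> set D' \<and> \<not> Pb x" for x
  proof -
    assume x: "x \<in> set S"
    have "int n - 1 < k + int (f x)"
      using dropWhile_gt[OF fsD'i, of x "int n - 1"] x unfolding S_def Pb_def by simp
    moreover have "x \<in> set D'" using x D'BS by simp
    ultimately show ?thesis unfolding Pb_def by simp
  qed
  have gB: "g x = k + int (f x)" if "x \<in> set B" for x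
  proof -
    have x: "x \<in> set D'" "Pb x" using Bmem[OF that] by auto
    have "0 \<le> k - 1 + int (f x)" "k - 1 + int (f x) < int n - 1" using x k unfolding Pb_def by auto
    then have "(k - 1 + int (f x)) mod (int n - 1) = k - 1 + int (f x)" by (rule mod_pos_pos_trivial)
    then show ?thesis using gD'[OF x(1)] by simp
  qed
  have gS: "g x = k + int (f x) - (int n - 1)" "int (f x) \<le> int n - 2" if "x \<in> set S" for x
  proof -
    have x: "x \<in> set D'" "\<not> Pb x" using Smem[OF that] by auto
    have fl: "f x < n - 1" using D'lt[OF x(1)] .
    then show "int (f x) \<le> int n - 2" using n2 by linarith
    have fli: "int (f x) \<le> int n - 2" using fl n2 by linarith
    have np: "\<not> k + int (f x) \<le> int n - 1" using x(2) unfolding Pb_def .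
    have b1: "0 \<le> k - 1 + int (f x) - (int n - 1)" using np by linarith
    have b2: "k - 1 + int (f x) - (int n - 1) < int n - 1" using fli k by auto
    have "(k - 1 + int (f x)) mod (int n - 1) = (k - 1 + int (f x) - (int n - 1)) mod (int n - 1)"
      by (rule minus_mod_self2[symmetric])
    also have "\<dots> = k - 1 + int (f x) - (int n - 1)"
      by (rule mod_pos_pos_trivial[OF b1 b2])
    finally show "g x = k + int (f x) - (int n - 1)" using gD'[OF x(1)] by simp
  qed
  define cs where "cs = map g D"
  define j where "j = length B"
  have l1: "length D = Suc (length D')" using Deq by (metis length_append_singleton)
  have l2: "length D' = length B + length S" using D'BS by simp
  have jlt: "j < length cs" unfolding j_def cs_def using l1 l2 by simp
  have bcs: "butlast cs = map g D'" unfolding cs_def D'_def by (simp add: map_butlast)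
  have dropj: "drop j (butlast cs) = map g S" unfolding bcs j_def D'BS by simp
  have takej: "take j cs = map g B"
  proof -
    obtain R where R: "D = B @ R" using Deq D'BS by (metis append.assoc)
    then have "take j D = B" unfolding j_def by simp
    then show ?thesis unfolding cs_def by (simp add: take_map)
  qed
  have sortS: "sorted_wrt (<) (map g S)"
  proof -
    have "sorted_wrt (\<lambda>x y. f x < f y) S" using fsD' D'BS by (metis sorted_wrt_append)
    then show ?thesis unfolding sorted_wrt_map
      by (rule sorted_wrt_mono_rel[rotated]) (simp add: gS)
  qed
  have sortB: "sorted_wrt (<) (map g B)"
  proof -
    have "sorted_wrt (\<lambda>x y. f x < f y) B" using fsD' D'BS by (metis sorted_wrt_append)
    then show ?thesis unfolding sorted_wrt_map
      by (rule sorted_wrt_mono_rel[rotated]) (simp add: gB)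
  qed
  have Sk: "\<forall>x\<in>set (map g S). x < k"
  proof
    fix y assume "y \<in> set (map g S)"
    then obtain x where x: "x \<in> set S" "y = g x" by auto
    then show "y < k" using gS[OF x(1)] by simp
  qed
  have Bk: "\<forall>y\<in>set (map g B). k < y"
  proof
    fix y assume "y \<in> set (map g B)"
    then obtain x where x: "x \<in> set B" "y = g x" by auto
    have "f x \<ge> 1" using fge D'mem Bmem[OF x(1)] by blast
    then show "k < y" using gB[OF x(1)] x by simp
  qed
  have "sorted_wrt (<) (map g S @ [k] @ map g B)"
  proof -
    have SB: "\<forall>x\<in>set (map g S). \<forall>y\<in>set (map g B). x < y"
    proof (intro ballI)
      fix x y assume "x \<in> set (map g S)" "y \<in> set (map g B)"
      then have "x < k" "k < y" using Sk Bk by auto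
      then show "x < y" by simp
    qed
    show ?thesis unfolding sorted_wrt_append using sortS sortB Sk Bk SB by auto
  qed
  then have "sorted_wrt (<) (drop j (butlast cs) @ [k] @ take j cs)" unfolding dropj takej .
  then show ?thesis unfolding cyc_cond_def cs_def D_def[symmetric] g_def[symmetric] using jlt cs_def by blast
qed

end

lemma modn_shift: "modn n (x + q * int n) = modn n x"
  unfolding modn_def by (metis add_diff_eq diff_add_eq mod_mult_self1)

lemma modn_eq_iff: "modn n x = modn n y \<longleftrightarrow> x mod int n = y mod int n"
proof -
  have "modn n x = modn n y \<longleftrightarrow> (x - 1) mod int n = (y - 1) mod int n" unfolding modn_def by simp
  also have "\<dots> \<longleftrightarrow> int n dvd (x - 1) - (y - 1)" by (rule mod_eq_dvd_iff)
  also have "\<dots> \<longleftrightarrow> int n dvd x - y" by simp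
  also have "\<dots> \<longleftrightarrow> x mod int n = y mod int n" by (rule mod_eq_dvd_iff[symmetric])
  finally show ?thesis .
qed

lemma modn_small: "1 \<le> x \<Longrightarrow> x \<le> int n \<Longrightarrow> modn n x = x"
  unfolding modn_def by simp

locale good = walk +
  assumes prodid: "prodw u = id"
  assumes skl: "length (skips u) = 2 * n - 2"
begin

lemma sk_fun: "sk = (\<lambda>t. u ! t = id)" by (rule ext) (rule skdef)

lemma n1int: "int (n - Suc 0) = int n - 1" using n2 by simp

lemma skips_eq: "skips u = map Suc (filter sk [0..<T])"
proof -
  have "[1..<length u + 1] = map Suc [0..<T]" using len_u by (simp add: map_Suc_upt)
  then show ?thesis unfolding skips_def sk_fun by (simp add: filter_map o_def)
qed

lemma len_filter: "length (filter sk [0..<T]) = 2 * n - 2"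
  using skl skips_eq by simp

lemma card_sk: "card {t. t < T \<and> sk t} = 2 * n - 2"
proof -
  have "{t. t < T \<and> sk t} = set (filter sk [0..<T])" by auto
  then show ?thesis using len_filter distinct_card[of "filter sk [0..<T]"] by simp
qed

lemma wT: "w T = id"
  unfolding upref_def using len_u prodid by simp

lemma T_int: "int T = int n * (int n - 1)" using n2 by (simp add: of_nat_diff)

lemma fin_car: "cr T = int n \<and> C (int n) T = n - 1"
proof -
  have V: "V1 T" using corr by simp
  have m: "modn n (int T) = int n"
  proof -
    have "int T = 0 + (int n - 1) * int n" using T_int by (simp add: algebra_simps)
    then have "modn n (int T) = modn n 0" using modn_shift by metis
    then show ?thesis using modn_0 n2 by simp
  qed
  have c: "cr T = int n" using V m wT unfolding V1_def by simp
  define c' where "c' = int (C (int n) T)"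
  have "(int n - 1) * (int T - int n + int n) = int n * (int T - int n + int n - c')"
    using V wT c unfolding V1_def c'_def by simp
  then have "(int n - 1) * (int n * (int n - 1)) = int n * (int n * (int n - 1) - c')" using T_int by (simp only:) simp
  then have "int n * ((int n - 1) * (int n - 1)) = int n * (int n * (int n - 1) - c')" by (simp add: algebra_simps)
  then have "(int n - 1) * (int n - 1) = int n * (int n - 1) - c'" using n2 by (simp only: mult_cancel_left) simp
  then have "c' = int n * (int n - 1) - (int n - 1) * (int n - 1)" by simp
  also have "\<dots> = int n - 1" by (simp add: algebra_simps)
  finally have "c' = int n - 1" .
  then show ?thesis using c c'_def n2 by simp
qed

lemma fin_box:
  assumes s: "1 \<le> s" "s \<le> n - 1"
  shows "bx T (s - 1) = int s \<and> C (int s) T = n - 1"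
proof -
  have V: "V2 T s" using corr s by simp
  have idx: "(T + s - 1) mod (n - 1) = s - 1"
  proof -
    have "T + s - 1 = (s - 1) + n * (n - 1)" using s by simp
    then have "(T + s - 1) mod (n - 1) = (s - 1) mod (n - 1)" by simp
    then show ?thesis using s by simp
  qed
  have ms: "modn n (int T + int s) = int s"
  proof -
    have "int T + int s = int s + (int n - 1) * int n" using T_int by (simp add: algebra_simps)
    then have "modn n (int T + int s) = modn n (int s)" using modn_shift by metis
    then show ?thesis using modn_small[of "int s" n] s n2 by simp
  qed
  have e: "bx T (s - 1) = int s" using V wT ms idx unfolding V2_def Let_def by simp
  define c' where "c' = int (C (int s) T)"
  have "(int n - 1) * (int T + int s - int s + int n) = int n * (int T + int s - 1 - int s + int n - c')"
    using V wT idx e unfolding V2_def Let_def c'_def by simp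
  then have "(int n - 1) * (int n * (int n - 1) + int n) = int n * (int n * (int n - 1) + int n - 1 - c')"
    using T_int by (simp only:) simp
  then have "int n * ((int n - 1) * int n) = int n * (int n * (int n - 1) + int n - 1 - c')"
    by (simp add: algebra_simps)
  then have "(int n - 1) * int n = int n * (int n - 1) + int n - 1 - c'" using n2 by (simp only: mult_cancel_left) simp
  then have "c' = int n - 1" by (simp add: algebra_simps)
  then show ?thesis using e c'_def n2 by simp
qed

lemma final_ax: "final n sk"
proof
  show "card {t. t < n * (n - 1) \<and> sk t} = 2 * n - 2" using card_sk .
  show "car n sk (n * (n - 1)) = int n" using fin_car by simp
  show "box n sk (n * (n - 1)) b = int b + 1" if "b < n - 1" for b
    using fin_box[of "b + 1"] that by simp
  show "Cnt n sk k (n * (n - 1)) = n - 1" if "k \<in> {1..int n}" for k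
  proof (cases "k = int n")
    case True then show ?thesis using fin_car by simp
  next
    case False
    then have "1 \<le> nat k" "nat k \<le> n - 1" using that by auto
    then show ?thesis using fin_box[of "nat k"] that by simp
  qed
qed

end

sublocale good \<subseteq> final n sk by (rule final_ax)

context good begin

lemma taus_eq: "taus = filter sk [0..<T]" unfolding taus_def by simp

lemma tinv_eq: "t < T \<Longrightarrow> tinv n u (Suc t) = refl_aff n (w t (int t)) (w t (int t + 1))"
proof -
  assume t: "t < T"
  have p: "periodic n (w t)" "bij (w t)" using w_props[of t] t by auto
  have "tinv n u (Suc t) = w t \<circ> refl_aff n (int t) (int t + 1) \<circ> inv (w t)"
    unfolding tinv_def using sigma_Suc[of n t] n2 by simp
  also have "\<dots> = refl_aff n (w t (int t)) (w t (int t + 1))"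
    by (rule conj_refl[OF p]) (rule mod_Suc_ne[OF n2])
  finally show ?thesis .
qed

lemma rs_eq: "r_of n u = map (\<lambda>t. refl_aff n (w t (int t)) (w t (int t + 1))) taus"
proof -
  have "r_of n u = map (\<lambda>t. tinv n u (Suc t)) taus" unfolding r_of_def skips_eq taus_eq by simp
  also have "\<dots> = map (\<lambda>t. refl_aff n (w t (int t)) (w t (int t + 1))) taus"
    by (rule map_cong) (auto simp: taus_mem tinv_eq)
  finally show ?thesis .
qed

lemma len_taus: "length taus = 2 * n - 2" using len_filter taus_eq by simp

lemma res_car: "t \<le> T \<Longrightarrow> modn n (w t (int t)) = cr t"
  using corr unfolding V1_def by blast

lemma res_next: "t < T \<Longrightarrow> sk t \<Longrightarrow> modn n (w t (int t + 1)) = cr (Suc t)"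
proof -
  assume t: "t < T" "sk t"
  have "V2 t 1" using corr[of t] t n2 by simp
  then have "modn n (w t (int t + 1)) = bx t (t mod (n - 1))" unfolding V2_def Let_def by simp
  then show ?thesis using t by (simp add: car_Suc)
qed

lemma orient_w: "t < T \<Longrightarrow> sk t \<Longrightarrow> w t (int t) < w t (int t + 1)"
proof -
  assume t: "t < T" "sk t"
  define c where "c = w t (int t)"
  define y where "y = w t (int t + 1)"
  define e1 where "e1 = cr t"
  define e2 where "e2 = cr (Suc t)"
  define C1 where "C1 = int (C e1 t)"
  define C2 where "C2 = int (C e2 t)"
  have "V1 t" using corr t by simp
  then have eq1: "(int n - 1) * (c - e1 + int n) = int n * (int t - e1 + int n - C1)"
    unfolding V1_def c_def e1_def C1_def by simp
  have "V2 t 1" using corr[of t] t n2 by simp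
  then have eq2: "(int n - 1) * (y - e2 + int n) = int n * (int t - e2 + int n - C2)"
    unfolding V2_def Let_def y_def e2_def C2_def using t by (simp add: car_Suc)
  have pos: "0 < e1 - e2 + int n * (C1 - C2)" using orient[OF t] unfolding e1_def e2_def C1_def C2_def .
  have "(int n - 1) * (y - c) = (int n - 1) * (y - e2 + int n) - (int n - 1) * (c - e1 + int n) + (int n - 1) * (e2 - e1)"
    by (simp add: algebra_simps)
  also have "\<dots> = int n * (int t - e2 + int n - C2) - int n * (int t - e1 + int n - C1) + (int n - 1) * (e2 - e1)"
    unfolding eq1 eq2 ..
  also have "\<dots> = e1 - e2 + int n * (C1 - C2)" by (simp add: algebra_simps)
  finally have "0 < (int n - 1) * (y - c)" using pos by simp
  moreover have "0 < int n - 1" using n2 by simp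
  ultimately have "0 < y - c" using zero_less_mult_pos by blast
  then show ?thesis unfolding c_def y_def by simp
qed

lemma prefix_prod: "t \<le> T \<Longrightarrow> prodw (map (\<lambda>j. sigma n (Suc j)) [0..<t]) =
    prodw (map (\<lambda>j. tinv n u (Suc j)) (filter sk [0..<t])) \<circ> w t"
proof (induction t)
  case 0 then show ?case by simp
next
  case (Suc t)
  then have t: "t < T" by simp
  have IH: "prodw (map (\<lambda>j. sigma n (Suc j)) [0..<t]) = prodw (map (\<lambda>j. tinv n u (Suc j)) (filter sk [0..<t])) \<circ> w t"
    by (rule Suc.IH) (use t in simp)
  have L: "prodw (map (\<lambda>j. sigma n (Suc j)) [0..<Suc t]) = prodw (map (\<lambda>j. sigma n (Suc j)) [0..<t]) \<circ> sigma n (Suc t)"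
    by (simp add: prodw_snoc)
  have sg: "sigma n (Suc t) = refl_aff n (int t) (int t + 1)" using sigma_Suc[of n t] n2 by simp
  show ?case
  proof (cases "sk t")
    case False
    have wS: "w (Suc t) = w t \<circ> sigma n (Suc t)" using upref_Suc[of t u] len_u t u_nth[OF t] False sg by simp
    have fS: "filter sk [0..<Suc t] = filter sk [0..<t]" using False by simp
    show ?thesis unfolding L IH wS fS by (simp only: o_assoc)
  next
    case True
    have wS: "w (Suc t) = w t" using w_Suc_skip[OF t True] .
    have inj: "inj (w t)" using w_props[of t] t bij_is_inj by auto
    have ti: "tinv n u (Suc t) = w t \<circ> sigma n (Suc t) \<circ> inv (w t)" unfolding tinv_def by simp
    have tw: "tinv n u (Suc t) \<circ> w t = w t \<circ> sigma n (Suc t)"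
      unfolding ti by (simp only: o_assoc[symmetric] inv_o_cancel[OF inj] o_id)
    have e: "prodw (map (\<lambda>j. tinv n u (Suc j)) (filter sk [0..<t])) \<circ> w t \<circ> sigma n (Suc t) =
        prodw (map (\<lambda>j. tinv n u (Suc j)) (filter sk [0..<t])) \<circ> tinv n u (Suc t) \<circ> w t"
      by (simp only: o_assoc[symmetric] tw)
    have fS: "filter sk [0..<Suc t] = filter sk [0..<t] @ [t]" using True by simp
    show ?thesis unfolding L IH wS fS e by (simp add: prodw_snoc)
  qed
qed

lemma prod_rs: "prodw (r_of n u) = lambda_aff n"
proof -
  have "r_of n u = map (\<lambda>j. tinv n u (Suc j)) (filter sk [0..<T])"
    unfolding r_of_def skips_eq by simp
  then have "prodw (r_of n u) = prodw (map (\<lambda>j. sigma n (Suc j)) [0..<T])"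
    using prefix_prod[of T] wT by simp
  also have "\<dots> = cfun n ^^ (n - 1)" using word_prod[of n "n - 1"] n2 by simp
  also have "\<dots> = lambda_aff n" using cpow_lambda n2 by simp
  finally show ?thesis .
qed

end

lemma nth_filter_map:
  "map (\<lambda>i. g (xs ! i)) (filter (\<lambda>i. P (xs ! i)) [0..<length xs]) = map g (filter P xs)"
proof -
  have "filter P xs = filter P (map (\<lambda>i. xs ! i) [0..<length xs])" by (simp add: map_nth)
  also have "\<dots> = map (\<lambda>i. xs ! i) (filter (P \<circ> (\<lambda>i. xs ! i)) [0..<length xs])" by (rule filter_map)
  finally show ?thesis by (simp add: o_def)
qed

context good begin

definition aw :: "nat \<Rightarrow> int" where "aw i = w (taus ! i) (int (taus ! i))"
definition bw :: "nat \<Rightarrow> int" where "bw i = w (taus ! (i - 1)) (int (taus ! (i - 1)) + 1)"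

lemma taus_nth: "i < length taus \<Longrightarrow> taus ! i < T \<and> sk (taus ! i)"
  using nth_mem taus_mem by blast

lemma no_skip_between:
  assumes i: "Suc i < length taus" and s: "taus ! i < s" "s < taus ! Suc i"
  shows "\<not> sk s"
proof
  assume sks: "sk s"
  have "s < T" using taus_nth[OF i] s by simp
  then have "s \<in> set taus" using sks taus_mem by simp
  then obtain j where j: "j < length taus" "taus ! j = s" by (metis in_set_conv_nth)
  show False
  proof (cases "j \<le> i")
    case True
    then have "taus ! j \<le> taus ! i"
      using sorted_wrt_nth_less[OF taus_sorted, of j i] i by (cases "j = i") auto
    then show False using j s by simp
  next
    case False
    then have "Suc i \<le> j" by simp
    then have "taus ! Suc i \<le> taus ! j"
      using sorted_wrt_nth_less[OF taus_sorted, of "Suc i" j] j by (cases "j = Suc i") auto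
    then show False using j s by simp
  qed
qed

lemma len_rs: "length (r_of n u) = length taus" unfolding rs_eq by simp

lemma wit: "treelike_wit n (r_of n u) aw bw"
  unfolding treelike_wit_def
proof (intro conjI ballI)
  fix i assume i: "i \<in> {1..length (r_of n u)}"
  define t where "t = taus ! (i - 1)"
  have il: "i - 1 < length taus" using i len_rs by auto
  have t: "t < T" "sk t" using taus_nth[OF il] t_def by auto
  have ab: "aw (i - 1) = w t (int t)" "bw i = w t (int t + 1)" unfolding aw_def bw_def t_def by simp_all
  have "modn n (w t (int t)) \<noteq> modn n (w t (int t + 1))"
    using res_car[of t] res_next[OF t] t car_ne_box[OF col_lt, of t] by (simp add: car_Suc)
  then show "aw (i - 1) mod int n \<noteq> bw i mod int n" unfolding ab modn_eq_iff .
  show "r_of n u ! (i - 1) = refl_aff n (aw (i - 1)) (bw i)" unfolding rs_eq ab t_def using il by simp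
  show "aw (i - 1) < bw i" unfolding ab using orient_w[OF t] .
next
  fix i assume i: "i \<in> {1..2 * n - 3}"
  have il: "i < length taus" "i - 1 < length taus" using i len_taus by auto
  define t0 where "t0 = taus ! (i - 1)"
  define t1 where "t1 = taus ! i"
  have Si: "Suc (i - 1) = i" using i by simp
  have t0: "t0 < T" "sk t0" using taus_nth[OF il(2)] t0_def by auto
  have t1: "t1 < T" "sk t1" using taus_nth[OF il(1)] t1_def by auto
  have lt: "t0 < t1" unfolding t0_def t1_def using sorted_wrt_nth_less[OF taus_sorted, of "i - 1" i] il i by simp
  have "cr t1 = cr (Suc t0)"
  proof (rule car_const)
    fix s assume "Suc t0 \<le> s" "s < t1"
    then show "\<not> sk s" using no_skip_between[of "i - 1" s] il Si unfolding t0_def t1_def by simp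
  qed (use lt in simp)
  moreover have "modn n (aw i) = cr t1" unfolding aw_def t1_def[symmetric] using res_car t1 by simp
  moreover have "modn n (bw i) = cr (Suc t0)" unfolding bw_def t0_def[symmetric] using res_next[OF t0] .
  ultimately show "aw i mod int n = bw i mod int n" using modn_eq_iff by metis
qed

lemma Nlist_eq:
  assumes k: "k \<in> {1..int n}"
  shows "Nlist n (length (r_of n u)) aw bw k = map (\<lambda>t. cr (Suc t)) (filter (\<lambda>t. cr t = k) taus)"
proof -
  define M where "M = length taus"
  have mk: "modn n k = k" using modn_small k by auto
  have "Nlist n (length (r_of n u)) aw bw k =
      map (\<lambda>i. modn n (bw i)) (filter (\<lambda>i. modn n (aw (i - 1)) = modn n k) (map Suc [0..<M]))"
    unfolding Nlist_def len_rs M_def by (simp add: map_Suc_upt)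
  also have "\<dots> = map (\<lambda>i. modn n (bw (Suc i))) (filter (\<lambda>i. modn n (aw i) = k) [0..<M])"
    by (simp add: filter_map o_def mk)
  also have "\<dots> = map (\<lambda>i. cr (Suc (taus ! i))) (filter (\<lambda>i. cr (taus ! i) = k) [0..<M])"
  proof -
    have a: "modn n (aw i) = cr (taus ! i)" if "i < M" for i
      using res_car taus_nth[of i] that unfolding aw_def M_def by simp
    have b: "modn n (bw (Suc i)) = cr (Suc (taus ! i))" if "i < M" for i
      using res_next taus_nth[of i] that unfolding bw_def M_def by simp
    have "filter (\<lambda>i. modn n (aw i) = k) [0..<M] = filter (\<lambda>i. cr (taus ! i) = k) [0..<M]"
      by (rule filter_cong) (auto simp: a)
    then show ?thesis by (auto simp: b intro!: map_cong)
  qed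
  also have "\<dots> = map (\<lambda>t. cr (Suc t)) (filter (\<lambda>t. cr t = k) taus)"
    unfolding M_def by (rule nth_filter_map)
  finally show ?thesis .
qed

lemma main: "cyclic_factorization_of_lambda n (r_of n u)"
proof -
  have rf: "r_of n u \<in> fact_lambda n"
    unfolding fact_lambda_def
  proof (intro CollectI conjI ballI)
    show "length (r_of n u) = 2 * n - 2" using len_rs len_taus by simp
    show "prodw (r_of n u) = lambda_aff n" by (rule prod_rs)
  next
    fix r assume "r \<in> set (r_of n u)"
    then obtain t where t: "t \<in> set taus" "r = refl_aff n (w t (int t)) (w t (int t + 1))"
      unfolding rs_eq by auto
    have tt: "t < T" "sk t" using t taus_mem by auto
    have "modn n (w t (int t)) \<noteq> modn n (w t (int t + 1))"
      using res_car[of t] res_next[OF tt] tt car_ne_box[OF col_lt, of t] by (simp add: car_Suc)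
    then have "w t (int t) mod int n \<noteq> w t (int t + 1) mod int n" unfolding modn_eq_iff .
    then show "is_reflection n r" unfolding is_reflection_def using t by blast
  qed
  have cf: "cyclic_fact n (r_of n u)"
    unfolding cyclic_fact_def
  proof (intro exI conjI ballI)
    show "treelike_wit n (r_of n u) aw bw" by (rule wit)
    show "sorted_wrt (<) (Nlist n (length (r_of n u)) aw bw (int n))"
      using Nlist_eq[of "int n"] root_sorted n2 by simp
  next
    fix k assume k: "k \<in> {1..<int n}"
    then have "k \<in> {1..int n}" by simp
    then show "cyc_cond k (Nlist n (length (r_of n u)) aw bw k)"
      using Nlist_eq cyc_k[OF k] by simp
  qed
  have "treelike n (r_of n u)" unfolding treelike_def using wit by blast
  then show ?thesis unfolding cyclic_factorization_of_lambda_def using rf cf by blast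
qed

end

theorem corollary5p17:
  fixes n :: nat and u :: "(int \<Rightarrow> int) list"
  assumes "n \<ge> 2" and "u \<in> S_set n"
  shows "cyclic_factorization_of_lambda n (r_of n u)"
proof -
  have s: "is_subword n u" "length (skips u) = 2 * n - 2" "prodw u = id"
    using assms(2) unfolding S_set_def by auto
  interpret G: good n "\<lambda>t. u ! t = id" u
    by unfold_locales (use assms(1) s in auto)
  show ?thesis by (rule G.main)
qed

end
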